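(* (i) For every positive integer $k$, the sets $\{0,1,\dots,k-1\}$ and $k+\{0,k,2k,\dots,(k-1)k\}=\{k,2k,\dots,k^2\}$, viewed in $\mathbb{Z}_{k^2+1}$, form a (classical) $(k^2+1,2,k,1)$-SEDF in $\mathbb{Z}_{k^2+1}$. (ii) Let $v,k$ be positive integers with $k\mid v$, $v\mid k^2$ and $\lambda=k^2/v>1$, and in $\mathbb{Z}_{v+1}$ let $A_{X'}=\{0,1,\dots,k-1\}$ and $A_{Y'}=\{ak,ak+1,\dots,ak+\lambda-1: a=0,\dots,\tfrac{v}{k}-1\}$. Then there are no $s,t\in\mathbb{Z}_{v+1}$ and no $\mu$ such that $\{s+A_{X'}, t+A_{Y'}\}$ is a classical $(v+1,2,k,\mu)$-SEDF in $\mathbb{Z}_{v+1}$.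
   Context: For subsets $A,B$ of an additive group $G$, $\Delta(A,B)$ is the multiset $\{a-b:a\in A,b\in B\}$, and $s+A=\{s+a: a\in A\}$. For a group $G$ of order $v$ and $m>1$, a family of pairwise disjoint $k$-subsets $\{A_1,\dots,A_m\}$ of $G$ is a classical $(v,m,k,\lambda)$-SEDF if for each $i$ the multiset union $\bigcup_{j\neq i}\Delta(A_i,A_j)$ contains each non-identity element of $G$ exactly $\lambda$ times and does not contain $0$. (The sets $\{0,\dots,k-1\}$ and $\{0,k,\dots,(k-1)k\}$ form a non-disjoint $(k^2,2,k,1)$-SEDF in $\mathbb{Z}_{k^2}$; part (i) says a translation converts them into a classical SEDF in $\mathbb{Z}_{k^2+1}$, and part (ii) that no such conversion is possible when $\lambda>1$.) *)

theory Defs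
  imports Main "HOL-Library.Multiset"
begin

text \<open>The cyclic group Z_n is modelled by the residues {0..<n} (as integers) with
  addition and subtraction taken mod n.\<close>

definition Zn :: "nat \<Rightarrow> int set" where
  "Zn n = {0..<int n}"

definition Delta :: "nat \<Rightarrow> int set \<Rightarrow> int set \<Rightarrow> int multiset" where
  "Delta n A B = image_mset (\<lambda>(a, b). (a - b) mod int n) (mset_set (A \<times> B))"

definition translate :: "nat \<Rightarrow> int \<Rightarrow> int set \<Rightarrow> int set" where
  "translate n s A = (\<lambda>a. (s + a) mod int n) ` A"

definition SEDF :: "nat \<Rightarrow> nat \<Rightarrow> nat \<Rightarrow> nat \<Rightarrow> (nat \<Rightarrow> int set) \<Rightarrow> bool" where
  "SEDF v m k lam A \<longleftrightarrow>
     m > 1 \<and>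
     (\<forall>i<m. A i \<subseteq> Zn v \<and> card (A i) = k) \<and>
     (\<forall>i<m. \<forall>j<m. i \<noteq> j \<longrightarrow> A i \<inter> A j = {}) \<and>
     (\<forall>i<m. let D = (\<Sum>j\<in>{j. j < m \<and> j \<noteq> i}. Delta v (A i) (A j)) in
        count D 0 = 0 \<and> (\<forall>x\<in>Zn v. x \<noteq> 0 \<longrightarrow> count D x = lam))"

end

theory Submission
  imports Defs
begin

lemma count_img:
  assumes "finite S" "inj_on f S" "f ` S = T"
  shows "count (image_mset f (mset_set S)) x = (if x \<in> T then 1 else 0)"
  using image_mset_mset_set[OF assms(2)] assms by (auto simp add: count_mset_set')

lemma img_full:
  fixes f :: "int \<times> int \<Rightarrow> int"
  assumes "finite S" "inj_on f S" "f ` S \<subseteq> Zn N - {0}" "card S = N - 1" "N \<ge> 1"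
  shows "f ` S = Zn N - {0}"
proof (rule card_subset_eq)
  show "finite (Zn N - {0})" by (simp add: Zn_def)
  show "f ` S \<subseteq> Zn N - {0}" by fact
  have "card (Zn N - {0}) = N - 1" using assms(5) by (simp add: Zn_def)
  then show "card (f ` S) = card (Zn N - {0})" using card_image[OF assms(2)] assms(4) by simp
qed

lemma modK:
  fixes a m K :: int
  assumes "0 \<le> a" "a < K"
  shows "(a - m*K) mod K = a"
proof -
  have "(a - m*K) mod K = (a + (-m)*K) mod K" by simp
  also have "\<dots> = a mod K" by (rule mod_mult_self1)
  also have "\<dots> = a" using assms by (rule mod_pos_pos_trivial)
  finally show ?thesis .
qed

lemma part1:
  fixes k :: nat
  assumes k1: "k \<ge> 1"
  shows "SEDF (k^2 + 1) 2 k 1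
             (\<lambda>i. if i = 0 then {0..<int k}
                  else translate (k^2 + 1) (int k) {int (j * k) | j. j < k})"
proof -
  define N where "N = k^2 + 1"
  define K where "K = int k"
  have K1: "K \<ge> 1" using k1 by (simp add: K_def)
  have NK: "int N = K*K + 1" by (simp add: N_def K_def power2_eq_square)
  define A1 where "A1 = (\<lambda>j. j * K) ` {1..K}"
  have A1eq: "translate N K {int (j * k) | j. j < k} = A1"
  proof
    show "translate N K {int (j * k) | j. j < k} \<subseteq> A1"
    proof
      fix y assume "y \<in> translate N K {int (j * k) | j. j < k}"
      then obtain j where j: "j < k" "y = (K + int (j*k)) mod int N"
        unfolding translate_def by auto
      have e: "K + int (j*k) = int (j+1) * K" by (simp add: K_def algebra_simps)
      have "int (j+1) \<le> K" using j by (simp add: K_def)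
      hence "int (j+1) * K \<le> K * K" using K1 by (simp add: mult_right_mono)
      hence "(K + int (j*k)) mod int N = int (j+1) * K" using e NK K1
        by (simp add: mod_pos_pos_trivial)
      moreover have "int (j+1) \<in> {1..K}" using j by (simp add: K_def)
      ultimately show "y \<in> A1" unfolding A1_def using j by auto
    qed
  next
    show "A1 \<subseteq> translate N K {int (j * k) | j. j < k}"
    proof
      fix y assume "y \<in> A1"
      then obtain m where m: "1 \<le> m" "m \<le> K" "y = m * K" unfolding A1_def by auto
      define j where "j = nat (m - 1)"
      have j: "j < k" "int j = m - 1" using m by (auto simp: j_def K_def)
      have mj: "m = int j + 1" using j by simp
      have e: "K + int (j*k) = m * K" unfolding mj by (simp add: K_def algebra_simps)
      have "m * K \<le> K * K" using m K1 by (simp add: mult_right_mono)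
      hence "(K + int (j*k)) mod int N = y" using e NK K1 m
        by (simp add: mod_pos_pos_trivial)
      thus "y \<in> translate N K {int (j * k) | j. j < k}"
        unfolding translate_def using j by blast
    qed
  qed
  define A0 where "A0 = {0..<K}"
  have finA1: "finite A1" by (simp add: A1_def)
  have injA1: "inj_on (\<lambda>j. j * K) {1..K}" using K1 by (auto simp: inj_on_def)
  have cA1: "card A1 = k" unfolding A1_def using card_image[OF injA1] by (simp add: K_def)
  have cA0: "card A0 = k" by (simp add: A0_def K_def)
  have A1mem: "\<And>y. y \<in> A1 \<Longrightarrow> \<exists>m. 1 \<le> m \<and> m \<le> K \<and> y = m * K" unfolding A1_def by auto
  have A1bd: "y \<in> A1 \<Longrightarrow> K \<le> y \<and> y \<le> K*K" for y
    using A1mem[of y] K1 by (auto intro: mult_right_mono)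
  have "1*K \<le> K*K" using K1 by (intro mult_right_mono) auto
  hence KK: "K \<le> K*K+1" by simp
  have sub0: "A0 \<subseteq> Zn N" using NK K1 KK by (auto simp: A0_def Zn_def)
  have sub1: "A1 \<subseteq> Zn N"
  proof
    fix y assume "y \<in> A1"
    then have "K \<le> y \<and> y \<le> K*K" by (rule A1bd)
    thus "y \<in> Zn N" using NK K1 by (simp add: Zn_def)
  qed
  have disj: "A0 \<inter> A1 = {}" by (auto simp: A0_def dest: A1bd)
  have cS: "card (A0 \<times> A1) = N - 1" using cA0 cA1 by (simp add: card_cartesian_product N_def power2_eq_square)
  have cS': "card (A1 \<times> A0) = N - 1" using cA0 cA1 by (simp add: card_cartesian_product N_def power2_eq_square)
  have finS: "finite (A0 \<times> A1)" "finite (A1 \<times> A0)" using finA1 by (auto simp: A0_def)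
  have N1: "N \<ge> 1" by (simp add: N_def)
  define f where "f = (\<lambda>(a::int, b::int). (a - b) mod int N)"
  have fval: "p \<in> A0 \<times> A1 \<Longrightarrow> f p = fst p - snd p + int N" for p
  proof -
    assume "p \<in> A0 \<times> A1"
    then obtain a b where p: "p = (a,b)" "0 \<le> a" "a < K" "K \<le> b" "b \<le> K*K"
      using A1bd by (cases p) (auto simp: A0_def)
    have "(a - b) mod int N = a - b + int N"
      using p NK by (subst mod_pos_pos_trivial[symmetric, of "a - b + int N" "int N"]) auto
    thus ?thesis using p by (simp add: f_def)
  qed
  have inj1: "inj_on f (A0 \<times> A1)"
  proof (rule inj_onI)
    fix p q assume p: "p \<in> A0 \<times> A1" and q: "q \<in> A0 \<times> A1" and e: "f p = f q"
    obtain a b where ab: "p = (a,b)" "a \<in> A0" "b \<in> A1" using p by auto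
    obtain a' b' where ab': "q = (a',b')" "a' \<in> A0" "b' \<in> A1" using q by auto
    obtain m where m: "b = m * K" using A1mem ab by blast
    obtain m' where m': "b' = m' * K" using A1mem ab' by blast
    have e2: "a - m*K = a' - m'*K" using e fval[OF p] fval[OF q] ab ab' m m' by simp
    have "(a - m*K) mod K = a" using ab modK by (simp add: A0_def)
    moreover have "(a' - m'*K) mod K = a'" using ab' modK by (simp add: A0_def)
    ultimately have "a = a'" using e2 by simp
    then show "p = q" using e2 ab ab' m m' K1 by simp
  qed
  have im1: "f ` (A0 \<times> A1) \<subseteq> Zn N - {0}"
  proof
    fix y assume "y \<in> f ` (A0 \<times> A1)"
    then obtain p where p: "p \<in> A0 \<times> A1" "y = f p" by auto
    obtain a b where ab: "p = (a,b)" "0 \<le> a" "a < K" "K \<le> b" "b \<le> K*K"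
      using p A1bd by (cases p) (auto simp: A0_def)
    show "y \<in> Zn N - {0}" using fval[OF p(1)] p ab NK by (auto simp: Zn_def)
  qed
  have D1: "count (Delta N A0 A1) x = (if x \<in> Zn N - {0} then 1 else 0)" for x
    unfolding Delta_def f_def[symmetric]
    by (rule count_img[OF finS(1) inj1 img_full[OF finS(1) inj1 im1 cS N1]])
  define g where "g = (\<lambda>(a::int, b::int). (a - b) mod int N)"
  have gval: "p \<in> A1 \<times> A0 \<Longrightarrow> g p = fst p - snd p" for p
  proof -
    assume "p \<in> A1 \<times> A0"
    then obtain a b where p: "p = (b,a)" "0 \<le> a" "a < K" "K \<le> b" "b \<le> K*K"
      using A1bd by (cases p) (auto simp: A0_def)
    have "(b - a) mod int N = b - a"
      using p NK by (intro mod_pos_pos_trivial) auto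
    thus ?thesis using p by (simp add: g_def)
  qed
  have inj2: "inj_on g (A1 \<times> A0)"
  proof (rule inj_onI)
    fix p q assume p: "p \<in> A1 \<times> A0" and q: "q \<in> A1 \<times> A0" and e: "g p = g q"
    obtain a b where ab: "p = (b,a)" "a \<in> A0" "b \<in> A1" using p by auto
    obtain a' b' where ab': "q = (b',a')" "a' \<in> A0" "b' \<in> A1" using q by auto
    obtain m where m: "b = m * K" using A1mem ab by blast
    obtain m' where m': "b' = m' * K" using A1mem ab' by blast
    have e2: "a - m*K = a' - m'*K" using e gval[OF p] gval[OF q] ab ab' m m' by simp
    have "(a - m*K) mod K = a" using ab modK by (simp add: A0_def)
    moreover have "(a' - m'*K) mod K = a'" using ab' modK by (simp add: A0_def)
    ultimately have "a = a'" using e2 by simp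
    then show "p = q" using e2 ab ab' m m' K1 by simp
  qed
  have im2: "g ` (A1 \<times> A0) \<subseteq> Zn N - {0}"
  proof
    fix y assume "y \<in> g ` (A1 \<times> A0)"
    then obtain p where p: "p \<in> A1 \<times> A0" "y = g p" by auto
    obtain a b where ab: "p = (b,a)" "0 \<le> a" "a < K" "K \<le> b" "b \<le> K*K"
      using p A1bd by (cases p) (auto simp: A0_def)
    show "y \<in> Zn N - {0}" using gval[OF p(1)] p ab NK by (auto simp: Zn_def)
  qed
  have D2: "count (Delta N A1 A0) x = (if x \<in> Zn N - {0} then 1 else 0)" for x
    unfolding Delta_def g_def[symmetric]
    by (rule count_img[OF finS(2) inj2 img_full[OF finS(2) inj2 im2 cS' N1]])
  have s0: "{j. j < (2::nat) \<and> j \<noteq> 0} = {1}" by auto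
  have s1: "{j. j < (2::nat) \<and> j \<noteq> 1} = {0}" by auto
  have i2: "\<And>i::nat. i < 2 \<longleftrightarrow> i = 0 \<or> i = 1" by auto
  define A where "A = (\<lambda>i::nat. if i = 0 then A0 else A1)"
  have c2: "\<forall>i<2. A i \<subseteq> Zn N \<and> card (A i) = k" using sub0 sub1 cA0 cA1 by (auto simp: i2 A_def)
  have c3: "\<forall>i<2. \<forall>j<2. i \<noteq> j \<longrightarrow> A i \<inter> A j = {}" using disj by (auto simp: i2 A_def)
  have c4: "\<forall>i<2. let D = (\<Sum>j\<in>{j. j < 2 \<and> j \<noteq> i}. Delta N (A i) (A j)) in
        count D 0 = 0 \<and> (\<forall>x\<in>Zn N. x \<noteq> 0 \<longrightarrow> count D x = 1)"
  proof (intro allI impI)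
    fix i :: nat assume "i < 2"
    then consider "i = 0" | "i = 1" by linarith
    then show "let D = (\<Sum>j\<in>{j. j < 2 \<and> j \<noteq> i}. Delta N (A i) (A j)) in
        count D 0 = 0 \<and> (\<forall>x\<in>Zn N. x \<noteq> 0 \<longrightarrow> count D x = 1)"
    proof cases
      case 1
      show ?thesis unfolding 1 s0 Let_def using D1 by (simp add: A_def)
    next
      case 2
      show ?thesis unfolding 2 s1 Let_def using D2 by (simp add: A_def)
    qed
  qed
  have "SEDF N 2 k 1 A" unfolding SEDF_def using c2 c3 c4 by simp
  moreover have "A = (\<lambda>i. if i = 0 then {0..<int k}
                  else translate (k^2 + 1) (int k) {int (j * k) | j. j < k})"
    unfolding A_def A0_def K_def[symmetric] N_def[symmetric] A1eq ..
  ultimately show ?thesis unfolding N_def by simp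
qed


lemma cover:
  fixes w lam k v :: nat and d :: int
  assumes "k = lam*w" "v = w*k" "lam \<ge> 2" "w \<ge> 1" "0 \<le> d" "d \<le> int v"
  shows "\<exists>i a b. i < k \<and> a < w \<and> b < lam \<and> (int i - int (a*k+b)) mod int (v+1) = d"
proof -
  have k1: "k \<ge> 2" using assms(1,3,4) proof -
    have "lam*1 \<le> lam*w" using assms(4) by (rule mult_le_mono2)
    thus ?thesis using assms(1,3) by linarith
  qed
  consider "d < int k" | "d = int k" | "d > int k" by linarith
  then show ?thesis
  proof cases
    case 1
    have "nat d < k" "0 < w" "0 < lam" "(int (nat d) - int (0*k+0)) mod int (v+1) = d"
      using 1 assms(3,4,5,6) by (auto simp: mod_pos_pos_trivial)
    then show ?thesis by blast
  next
    case 2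
    have vk: "int v = int (w-1) * int k + int k" using assms(2,4)
      proof -
      have "v = (w-1)*k + k" using assms(2,4) by (cases w) auto
      thus ?thesis by simp
    qed
    have "(int 0 - int ((w-1)*k+1)) mod int (v+1) = d"
    proof -
      have h: "int 0 - int ((w-1)*k+1) = d - int (v+1)" using vk 2 by simp
      have "(int 0 - int ((w-1)*k+1)) mod int (v+1) = (d - int (v+1)) mod int (v+1)" by (simp only: h)
      also have "\<dots> = d mod int (v+1)" by (rule minus_mod_self2)
      also have "\<dots> = d" using assms(5,6) by (intro mod_pos_pos_trivial) auto
      finally show ?thesis .
    qed
    moreover have "0 < k" "w - 1 < w" "1 < lam" using k1 assms(3,4) by auto
    ultimately show ?thesis by blast
  next
    case 3
    define K where "K = int k"
    define e where "e = int v + 1 - d"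
    define q where "q = (e - 1) div K"
    define r where "r = (e - 1) mod K"
    have K2: "K \<ge> 2" using k1 by (simp add: K_def)
    have e1: "e \<ge> 1" "e \<le> int v - K" using 3 assms by (auto simp: e_def K_def)
    have qr: "e - 1 = q*K + r" "0 \<le> r" "r < K" using K2 by (auto simp: q_def r_def)
    have q0: "q \<ge> 0" using e1 K2 by (simp add: q_def pos_imp_zdiv_nonneg_iff)
    have vk: "int v = int w * K" using assms(2) by (simp add: K_def)
    have "q * K < (int w - 1) * K" using qr e1 vk by (simp add: algebra_simps)
    hence qw: "q < int w - 1" using K2 by (simp add: mult_less_cancel_right)
    define a where "a = nat (q+1)"
    define i where "i = nat (K - 1 - r)"
    have ia: "int i = K - 1 - r" "int a = q + 1" using qr q0 by (auto simp: i_def a_def)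
    have "int i - int (a*k+0) = - e" using ia qr by (simp add: K_def[symmetric] algebra_simps)
    hence "(int i - int (a*k+0)) mod int (v+1) = d"
    proof -
      assume h: "int i - int (a*k+0) = - e"
      have "- e = d - int (v+1)" by (simp add: e_def)
      thus ?thesis using h assms by (simp add: mod_pos_pos_trivial)
    qed
    moreover have "i < k" using ia qr by (simp add: K_def)
    moreover have "a < w" using ia qw by simp
    ultimately show ?thesis using assms by (intro exI[of _ i] exI[of _ a] exI[of _ 0]) auto
  qed
qed

lemma part2:
  fixes v k :: nat
  assumes "v \<ge> 1 \<and> k \<ge> 1 \<and> k dvd v \<and> v dvd k^2 \<and> k^2 div v > 1"
  shows "let lam = k^2 div v;
                AX = {0..<int k};
                AY = {int (a * k + b) | a b. a < v div k \<and> b < lam}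
            in \<not> (\<exists>s\<in>Zn (v + 1). \<exists>t\<in>Zn (v + 1). \<exists>\<mu>.
                     SEDF (v + 1) 2 k \<mu>
                       (\<lambda>i. if i = 0 then translate (v + 1) s AX
                            else translate (v + 1) t AY))"
proof -
  define lam where "lam = k^2 div v"
  define w where "w = v div k"
  have v1: "v \<ge> 1" and k1: "k \<ge> 1" and l2: "lam \<ge> 2" using assms by (auto simp: lam_def)
  have vw: "v = w*k" using assms by (simp add: w_def)
  have kl: "k*k = lam * v" using assms by (simp add: lam_def power2_eq_square)
  have w1: "w \<ge> 1" using vw v1 by (cases w) auto
  have "k*k = (lam*w)*k" using kl vw by (metis mult.assoc)
  hence kk: "k = lam*w" using k1 by auto
  show ?thesis unfolding Let_def lam_def[symmetric] w_def[symmetric]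
  proof (intro notI, elim bexE exE)
    fix s t \<mu>
    assume H: "SEDF (v + 1) 2 k \<mu> (\<lambda>i. if i = 0 then translate (v + 1) s {0..<int k}
                    else translate (v + 1) t {int (a * k + b) | a b. a < w \<and> b < lam})"
    have dj: "translate (v + 1) s {0..<int k} \<inter> translate (v + 1) t {int (a * k + b) | a b. a < w \<and> b < lam} = {}"
    proof -
      have "\<forall>i<(2::nat). \<forall>j<2. i \<noteq> j \<longrightarrow> (\<lambda>i. if i = 0 then translate (v + 1) s {0..<int k}
                    else translate (v + 1) t {int (a * k + b) | a b. a < w \<and> b < lam}) i \<inter> (\<lambda>i. if i = 0 then translate (v + 1) s {0..<int k}
                    else translate (v + 1) t {int (a * k + b) | a b. a < w \<and> b < lam}) j = {}"
        using H unfolding SEDF_def by blast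
      from this[rule_format, of 0 1] show ?thesis by simp
    qed
    define d where "d = (t - s) mod int (v+1)"
    have d0: "0 \<le> d" by (simp add: d_def)
    have "d < int (v+1)" unfolding d_def by (rule pos_mod_bound) simp
    hence "d \<le> int v" by simp
    note d0 this
    then obtain i a b where iab: "i < k" "a < w" "b < lam" "(int i - int (a*k+b)) mod int (v+1) = d"
      using cover[OF kk vw l2 w1] by blast
    have "(s + int i) mod int (v+1) = (t + int (a*k+b)) mod int (v+1)"
    proof -
      have "int (v+1) dvd (int i - int (a*k+b)) - (t - s)" using iab(4) unfolding d_def mod_eq_dvd_iff .
      moreover have "(s + int i) - (t + int (a*k+b)) = (int i - int (a*k+b)) - (t - s)" by simp
      ultimately show ?thesis unfolding mod_eq_dvd_iff by metis
    qed
    moreover have "(s + int i) mod int (v+1) \<in> translate (v + 1) s {0..<int k}"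
      unfolding translate_def using iab by auto
    moreover have "(t + int (a*k+b)) mod int (v+1) \<in> translate (v + 1) t {int (a * k + b) | a b. a < w \<and> b < lam}"
      unfolding translate_def using iab by blast
    ultimately show False using dj by auto
  qed
qed

theorem theorem4p2:
  shows "(\<forall>k::nat. k \<ge> 1 \<longrightarrow>
           SEDF (k^2 + 1) 2 k 1
             (\<lambda>i. if i = 0 then {0..<int k}
                  else translate (k^2 + 1) (int k) {int (j * k) | j. j < k}))
       \<and> (\<forall>v k :: nat. v \<ge> 1 \<and> k \<ge> 1 \<and> k dvd v \<and> v dvd k^2 \<and> k^2 div v > 1 \<longrightarrow>
           (let lam = k^2 div v;
                AX = {0..<int k};
                AY = {int (a * k + b) | a b. a < v div k \<and> b < lam}
            in \<not> (\<exists>s\<in>Zn (v + 1). \<exists>t\<in>Zn (v + 1). \<exists>\<mu>.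
                     SEDF (v + 1) 2 k \<mu>
                       (\<lambda>i. if i = 0 then translate (v + 1) s AX
                            else translate (v + 1) t AY))))"
  using part1 part2 by blast

end
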